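(* Work in the Poincaré ball model of $\mathbb{H}^3$. For $a>1$ let $P_{3,4}(a)$ be the intersection of the open unit ball with the sets $H(ap)$ for all $p\in\{(\pm1,\pm1,\pm1)/\sqrt3\}$. Then: (1) For $a>\sqrt3$, the four spheres $S(a(\pm1,\pm1,1)/\sqrt3)$ have a common point $p$ with $|p|<1$, and $P_{3,4}(a)$ is a finite octahedron. For $a=\sqrt3$ the octahedron is ideal with dihedral angle $\pi/2$. As $a\to\infty$, the dihedral angle increases to $\arccos(-1/3)$, the dihedral angle of the Euclidean octahedron. (2) For $a=\sqrt{3/2}$, $S(a(1,1,1)/\sqrt3)$ and $S(a(1,-1,1)/\sqrt3)$ touch. (3) For $a<\sqrt{3/2}$, $S(a(1,1,1)/\sqrt3)$ and $S(a(1,-1,1)/\sqrt3)$ are disjoint. (4) For $a>\sqrt{3/2}$, $S(a(1,1,1)/\sqrt3)$ and $S(a(1,-1,1)/\sqrt3)$ meet at a dihedral angle $\alpha$ with $\cos\alpha=\frac{3-a^2}{3(a^2-1)}$. (5) For $\sqrt3>a>\sqrt{3/2}$, $P_{3,4}(a)$ is hyperideal.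
   Context: For $x\in\mathbb{R}^3$ with $|x|>1$, $S(x)$ is the sphere centered at $x$ with radius $\sqrt{|x|^2-1}$ (it meets the unit sphere orthogonally and represents a hyperbolic plane), and $H(x)$ is the unbounded component of $\mathbb{R}^3\setminus S(x)$. The octahedron is finite if the four face-spheres around a vertex meet inside the open unit ball, ideal if they meet on the unit sphere, and hyperideal if adjacent face-spheres intersect but the four spheres around a vertex have no common point in the closed unit ball. *)

theory Defs
  imports "HOL-Analysis.Analysis"
begin

text \<open>Sphere S(x) orthogonal to the unit sphere, and H(x) the unbounded
  component of its complement.\<close>

definition S :: "real^3 \<Rightarrow> (real^3) set" where
  "S x = sphere x (sqrt ((norm x)^2 - 1))"

definition H :: "real^3 \<Rightarrow> (real^3) set" where
  "H x = outside (S x)"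

definition sign_vecs :: "(real^3) set" where
  "sign_vecs = {v. \<forall>i. v $ i = 1 \<or> v $ i = -1}"

definition ctr :: "real \<Rightarrow> real^3 \<Rightarrow> real^3" where
  "ctr a v = (a / sqrt 3) *\<^sub>R v"

definition P34 :: "real \<Rightarrow> (real^3) set" where
  "P34 a = ball 0 1 \<inter> (\<Inter>v\<in>sign_vecs. H (ctr a v))"

text \<open>The four faces around the vertex of P34 in direction sigma e_i.\<close>

definition vertex_faces :: "3 \<Rightarrow> real \<Rightarrow> (real^3) set" where
  "vertex_faces i \<sigma> = {v \<in> sign_vecs. v $ i = \<sigma>}"

definition adjacent_faces :: "real^3 \<Rightarrow> real^3 \<Rightarrow> bool" where
  "adjacent_faces v w \<longleftrightarrow> v \<in> sign_vecs \<and> w \<in> sign_vecs \<and> card {i. v $ i \<noteq> w $ i} = 1"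

definition oct_finite :: "real \<Rightarrow> bool" where
  "oct_finite a \<longleftrightarrow> (\<forall>i. \<forall>\<sigma>\<in>{1, -1}.
     \<exists>q. norm q < 1 \<and> (\<forall>v\<in>vertex_faces i \<sigma>. q \<in> S (ctr a v)))"

definition oct_ideal :: "real \<Rightarrow> bool" where
  "oct_ideal a \<longleftrightarrow> (\<forall>i. \<forall>\<sigma>\<in>{1, -1}.
     \<exists>q. norm q = 1 \<and> (\<forall>v\<in>vertex_faces i \<sigma>. q \<in> S (ctr a v)))"

definition oct_hyperideal :: "real \<Rightarrow> bool" where
  "oct_hyperideal a \<longleftrightarrow>
     (\<forall>v w. adjacent_faces v w \<longrightarrow> S (ctr a v) \<inter> S (ctr a w) \<noteq> {}) \<and>
     (\<forall>i. \<forall>\<sigma>\<in>{1, -1}.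
        \<not> (\<exists>q. norm q \<le> 1 \<and> (\<forall>v\<in>vertex_faces i \<sigma>. q \<in> S (ctr a v))))"

text \<open>Dihedral angle, at a point q of S(c1) \<inter> S(c2), of the region H(c1) \<inter> H(c2)
  (exterior of both balls): pi minus the angle between the normals q - c1, q - c2.\<close>

definition dihedral_at :: "real^3 \<Rightarrow> real^3 \<Rightarrow> real^3 \<Rightarrow> real" where
  "dihedral_at c1 c2 q =
     pi - arccos (((q - c1) \<bullet> (q - c2)) / (norm (q - c1) * norm (q - c2)))"

definition oct_angle :: "real \<Rightarrow> real" where
  "oct_angle a = (let c1 = ctr a (vector [1, 1, 1]); c2 = ctr a (vector [1, -1, 1])
     in dihedral_at c1 c2 (SOME q. q \<in> S c1 \<inter> S c2))"

end

theory Submission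
  imports Defs
begin


lemma sign_norm2: assumes "v \<in> sign_vecs" shows "norm v ^ 2 = 3"
proof -
  have h: "\<And>j. v $ j * v $ j = 1" proof -
    fix j have "v $ j = 1 \<or> v $ j = -1" using assms unfolding sign_vecs_def by blast
    thus "v $ j * v $ j = 1" by auto
  qed
  show ?thesis unfolding power2_norm_eq_inner inner_vec_def by (simp add: sum_3 h)
qed

lemma norm_ctr: assumes "a > 0" "v \<in> sign_vecs" shows "norm (ctr a v) = a"
proof -
  have "norm v = sqrt 3" using sign_norm2[OF assms(2)] by (metis norm_ge_zero real_sqrt_unique)
  thus ?thesis using assms(1) by (simp add: ctr_def)
qed

lemma inS: assumes "norm c = a" "a > 1"
  shows "q \<in> S c \<longleftrightarrow> norm q ^ 2 + 1 = 2 * (q \<bullet> c)"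
proof -
  have p: "a^2 - 1 \<ge> 0" using assms(2) by (simp add: one_less_power less_imp_le)
  have 1: "q \<in> S c \<longleftrightarrow> dist c q = sqrt (a^2 - 1)" using assms(1) by (simp add: S_def)
  have 2: "dist c q = sqrt (a^2 - 1) \<longleftrightarrow> (dist c q)^2 = a^2 - 1"
  proof
    assume "dist c q = sqrt (a^2 - 1)" thus "(dist c q)^2 = a^2 - 1" using p by simp
  next
    assume "(dist c q)^2 = a^2 - 1" thus "dist c q = sqrt (a^2 - 1)"
      using real_sqrt_unique[of "dist c q" "a^2 - 1"] zero_le_dist by simp
  qed
  have cc0: "c \<bullet> c = norm c ^ 2" by (simp add: power2_norm_eq_inner)
  have cc: "c \<bullet> c = a ^ 2" using cc0 assms(1) by simp
  have 3: "(dist c q)^2 = norm q ^ 2 - 2 * (q \<bullet> c) + a^2"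
    using cc unfolding dist_norm power2_norm_eq_inner by (simp add: inner_diff_left inner_diff_right inner_commute)
  show ?thesis unfolding 1 2 3 by auto
qed

lemma dot_from_spheres:
  assumes "q \<in> S c1" "q \<in> S c2" "norm c1 = a" "norm c2 = a" "a > 1"
  shows "(q - c1) \<bullet> (q - c2) = (2 * (a^2 - 1) - norm (c1 - c2)^2) / 2"
    and "norm (q - c1) = sqrt (a^2 - 1)" "norm (q - c2) = sqrt (a^2 - 1)"
proof -
  have d1: "dist c1 q = sqrt (a^2 - 1)" using assms(1,3) by (simp add: S_def)
  have d2: "dist c2 q = sqrt (a^2 - 1)" using assms(2,4) by (simp add: S_def)
  show n1: "norm (q - c1) = sqrt (a^2 - 1)" using d1 by (metis dist_commute dist_norm)
  show n2: "norm (q - c2) = sqrt (a^2 - 1)" using d2 by (metis dist_commute dist_norm)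
  have p: "a^2 - 1 \<ge> 0" using assms(5) by (simp add: one_less_power less_imp_le)
  have sq: "sqrt (a^2 - 1)^2 = a^2 - 1" using p by (rule real_sqrt_pow2)
  have e: "(q - c1) - (q - c2) = -(c1 - c2)" by simp
  have "(q - c1) \<bullet> (q - c2) = (norm (q - c1)^2 + norm (q - c2)^2 - norm ((q - c1) - (q - c2))^2) / 2"
    by (rule dot_norm_neg)
  also have "\<dots> = (2 * (a^2 - 1) - norm (c1 - c2)^2) / 2" unfolding e norm_minus_cancel n1 n2 sq by simp
  finally show "(q - c1) \<bullet> (q - c2) = (2 * (a^2 - 1) - norm (c1 - c2)^2) / 2" .
qed

lemma dihedral_formula:
  assumes "q \<in> S c1" "q \<in> S c2" "norm c1 = a" "norm c2 = a" "a > 1"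
  shows "dihedral_at c1 c2 q = pi - arccos (1 - norm (c1 - c2)^2 / (2 * (a^2 - 1)))"
proof -
  note d = dot_from_spheres[OF assms]
  have r: "sqrt (a^2-1) * sqrt (a^2-1) = a^2 - 1" using assms(5) by simp
  have p: "a^2 - 1 > 0" using assms(5) by (simp add: one_less_power)
  have "((q - c1) \<bullet> (q - c2)) / (norm (q - c1) * norm (q - c2)) = 1 - norm (c1 - c2)^2 / (2 * (a^2 - 1))"
  proof -
    have "((q - c1) \<bullet> (q - c2)) / (norm (q - c1) * norm (q - c2)) = ((2 * (a^2 - 1) - norm (c1 - c2)^2) / 2) / (a^2 - 1)"
      by (simp only: d r)
    also have "\<dots> = 1 - norm (c1 - c2)^2 / (2 * (a^2 - 1))" using p by (simp add: field_simps)
    finally show ?thesis .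
  qed
  thus ?thesis by (simp add: dihedral_at_def)
qed

lemma dihedral_range:
  assumes "q \<in> S c1" "q \<in> S c2" "norm c1 = a" "norm c2 = a" "a > 1"
  shows "\<bar>1 - norm (c1 - c2)^2 / (2 * (a^2 - 1))\<bar> \<le> 1"
proof -
  note d = dot_from_spheres[OF assms]
  have "\<bar>(q - c1) \<bullet> (q - c2)\<bar> \<le> norm (q-c1) * norm (q-c2)" by (rule Cauchy_Schwarz_ineq2)
  also have "\<dots> = a^2 - 1" using d assms(5) by simp
  finally have "\<bar>(2 * (a^2 - 1) - norm (c1 - c2)^2) / 2\<bar> \<le> a^2 - 1" using d by simp
  moreover have "a^2 - 1 > 0" using assms(5) by (simp add: one_less_power)
  ultimately show ?thesis by (simp add: field_simps abs_le_iff)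
qed

lemma meet:
  assumes "norm c1 = a" "norm c2 = a" "a > 1" "norm (c1 - c2)^2 \<le> 4 * (a^2 - 1)"
  shows "S c1 \<inter> S c2 \<noteq> {}"
proof -
  define m where "m = (1/2) *\<^sub>R (c1 + c2)"
  define M where "M = m \<bullet> m"
  have a1: "c1 \<bullet> c1 = a^2" "c2 \<bullet> c2 = a^2" using assms(1,2) power2_norm_eq_inner by metis+
  have dd: "norm (c1 - c2)^2 = 2*a^2 - 2 * (c1 \<bullet> c2)"
    using a1 by (simp add: power2_norm_eq_inner inner_diff_left inner_diff_right inner_commute)
  have Mv: "M = (a^2 + c1 \<bullet> c2)/2" using a1 by (simp add: M_def m_def inner_add_left inner_add_right inner_commute)
  have M1: "M \<ge> 1" using assms(4) dd Mv by simp
  have mc1: "m \<bullet> c1 = M" "m \<bullet> c2 = M" using a1 Mv by (simp_all add: m_def inner_add_left inner_add_right inner_commute)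
  define l where "l = 1 + sqrt ((M - 1)/M)"
  have l1: "(l - 1)^2 = (M-1)/M" unfolding l_def using M1 by simp
  have lsq: "M * (l - 1)^2 = M - 1" unfolding l1 using M1 by simp
  define q where "q = l *\<^sub>R m"
  have qq: "norm q ^ 2 = l^2 * M" unfolding power2_norm_eq_inner q_def M_def by (simp add: power2_eq_square)
  have qc: "q \<bullet> c1 = l * M" "q \<bullet> c2 = l * M" using mc1 by (simp_all add: q_def)
  have ex: "M*(l-1)^2 = l^2*M - 2*(l*M) + M" by (simp add: power2_eq_square algebra_simps)
  have ex2: "l^2 * M + 1 = 2 * (l * M)" using ex lsq by linarith
  have "norm q ^ 2 + 1 = 2 * (q \<bullet> c1)" using qq qc ex2 by simp
  moreover have "norm q ^ 2 + 1 = 2 * (q \<bullet> c2)" using qq qc ex2 by simp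
  ultimately have "q \<in> S c1 \<inter> S c2" using inS[OF assms(1) assms(3)] inS[OF assms(2) assms(3)] by blast
  thus ?thesis by (metis empty_iff)
qed



lemma sign_pm: "v \<in> sign_vecs \<Longrightarrow> v $ j = 1 \<or> v $ j = -1"
  unfolding sign_vecs_def by blast

lemma adj_dist: assumes "adjacent_faces v w" shows "norm (v - w) ^ 2 = 4"
proof -
  have all: "v \<in> sign_vecs \<and> w \<in> sign_vecs \<and> card {i. v $ i \<noteq> w $ i} = 1"
    using assms unfolding adjacent_faces_def .
  hence v: "v \<in> sign_vecs" and w: "w \<in> sign_vecs" and c: "card {i. v $ i \<noteq> w $ i} = 1" by simp_all
  from c have "\<exists>k. {i. v $ i \<noteq> w $ i} = {k}" by (metis card_1_singletonE)
  then obtain k where k: "{i. v $ i \<noteq> w $ i} = {k}" by (elim exE)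
  have t: "(v $ j - w $ j) * (v $ j - w $ j) = (if j = k then 4 else 0)" for j
  proof (cases "j = k")
    case True
    hence "j \<in> {i. v $ i \<noteq> w $ i}" unfolding k by simp
    hence ne: "v $ j \<noteq> w $ j" by simp
    have "v $ j = 1 \<or> v $ j = -1" "w $ j = 1 \<or> w $ j = -1" using sign_pm[OF v] sign_pm[OF w] by blast+
    thus ?thesis using ne True by auto
  next
    case False
    hence "j \<notin> {i. v $ i \<noteq> w $ i}" unfolding k by simp
    hence "v $ j = w $ j" by simp
    thus ?thesis using False by simp
  qed
  have "norm (v - w) ^ 2 = (\<Sum>j\<in>UNIV. (v $ j - w $ j) * (v $ j - w $ j))"
    unfolding power2_norm_eq_inner inner_vec_def by simp
  also have "\<dots> = 4" unfolding t by simp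
  finally show ?thesis .
qed

lemma ctr_diff: "norm (ctr a v - ctr a w) ^ 2 = a^2 / 3 * norm (v - w) ^ 2"
proof -
  have "ctr a v - ctr a w = (a / sqrt 3) *\<^sub>R (v - w)" unfolding ctr_def by (simp add: scaleR_diff_right)
  hence "norm (ctr a v - ctr a w) = \<bar>a\<bar> / sqrt 3 * norm (v - w)" by simp
  thus ?thesis by (simp add: power_mult_distrib power_divide)
qed

lemma v111: "vector [1, 1, 1] \<in> sign_vecs" "vector [1, -1, 1] \<in> sign_vecs"
  unfolding sign_vecs_def by (simp_all add: forall_3)

lemma vs: "s1 \<in> {1,-1} \<Longrightarrow> s2 \<in> {1,-1} \<Longrightarrow> vector [s1, s2, 1] \<in> sign_vecs"
  unfolding sign_vecs_def by (auto simp add: forall_3)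

lemma d111: "norm (vector [1, 1, 1] - vector [1, -1, 1] :: real^3) ^ 2 = 4"
  unfolding power2_norm_eq_inner inner_vec_def by (simp add: sum_3)

lemma vertex_pt:
  fixes i :: 3 and t \<sigma> a :: real
  assumes "a > 1" "\<sigma> = 1 \<or> \<sigma> = -1" "v \<in> sign_vecs" "v $ i = \<sigma>" "t^2 + 1 = 2 * (a / sqrt 3) * t"
  shows "(\<chi> j. if j = i then \<sigma> * t else 0) \<in> S (ctr a v)"
    and "norm (\<chi> j. if j = i then \<sigma> * t else 0) = \<bar>t\<bar>"
proof -
  let ?q = "(\<chi> j. if j = i then \<sigma> * t else 0) :: real^3"
  have ss: "\<sigma> * \<sigma> = 1" using assms(2) by auto
  have qq0: "?q \<bullet> ?q = (\<Sum>j\<in>UNIV. if j = i then t^2 else 0)"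
    unfolding inner_vec_def by (rule sum.cong) (use ss in \<open>auto simp: power2_eq_square algebra_simps\<close>)
  have qc0: "?q \<bullet> ctr a v = (\<Sum>j\<in>UNIV. if j = i then (a / sqrt 3) * t else 0)"
    unfolding inner_vec_def by (rule sum.cong) (use ss assms(4) in \<open>auto simp: ctr_def algebra_simps\<close>)
  have qq: "?q \<bullet> ?q = t^2" unfolding qq0 by simp
  have qc: "?q \<bullet> ctr a v = (a / sqrt 3) * t" unfolding qc0 by simp
  have "norm ?q ^ 2 + 1 = 2 * (?q \<bullet> ctr a v)" unfolding power2_norm_eq_inner qq qc using assms(5) by simp
  thus "?q \<in> S (ctr a v)" using inS[OF norm_ctr[OF _ assms(3)]] assms(1) by simp
  show "norm ?q = \<bar>t\<bar>" unfolding norm_eq_sqrt_inner qq by simp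
qed



lemma sq_sum_inner: fixes A B :: "'a::real_inner"
  shows "(A + B) \<bullet> (A + B) = A \<bullet> A + B \<bullet> B + 2 * (A \<bullet> B)"
  by (simp add: inner_add_left inner_add_right inner_commute)

lemma tangent_pt:
  assumes "p \<in> S c1" "p \<in> S c2" "norm c1 = a" "norm c2 = a" "a > 1"
    "norm (c1 - c2)^2 = 4 * (a^2 - 1)"
  shows "p = (1/2) *\<^sub>R (c1 + c2)"
proof -
  note d = dot_from_spheres[OF assms(1-5)]
  have p: "a^2 - 1 \<ge> 0" using assms(5) by (simp add: one_less_power less_imp_le)
  have sq: "sqrt (a^2 - 1)^2 = a^2 - 1" using p by (rule real_sqrt_pow2)
  have AB: "(p - c1) \<bullet> (p - c2) = - (a^2 - 1)" using d(1) assms(6) by simp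
  have A: "(p - c1) \<bullet> (p - c1) = a^2 - 1" using d(2) sq by (simp add: power2_norm_eq_inner[symmetric])
  have B: "(p - c2) \<bullet> (p - c2) = a^2 - 1" using d(3) sq by (simp add: power2_norm_eq_inner[symmetric])
  have "((p - c1) + (p - c2)) \<bullet> ((p - c1) + (p - c2)) = (p - c1) \<bullet> (p - c1) + (p - c2) \<bullet> (p - c2) + 2 * ((p - c1) \<bullet> (p - c2))"
    by (rule sq_sum_inner)
  also have "\<dots> = 0" using AB A B by simp
  finally have "(p - c1) + (p - c2) = 0" by simp
  hence "2 *\<^sub>R p = c1 + c2" by (simp add: algebra_simps scaleR_2)
  hence "(1/2) *\<^sub>R (2 *\<^sub>R p) = (1/2) *\<^sub>R (c1 + c2)" by simp
  thus ?thesis by simp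
qed

lemma meet_bound:
  assumes "p \<in> S c1" "p \<in> S c2" "norm c1 = a" "norm c2 = a" "a > 1"
  shows "norm (c1 - c2)^2 \<le> 4 * (a^2 - 1)"
proof -
  have r: "\<bar>1 - norm (c1 - c2)^2 / (2 * (a^2 - 1))\<bar> \<le> 1" by (rule dihedral_range[OF assms])
  have p: "a^2 - 1 > 0" using assms(5) by (simp add: one_less_power)
  from r have "norm (c1 - c2)^2 / (2 * (a^2 - 1)) \<le> 2" by (simp add: abs_le_iff)
  thus ?thesis using p by (simp add: divide_le_eq)
qed

lemma hyper_vertex:
  fixes i :: 3 and \<sigma> a :: real
  assumes "a > 1" "a < sqrt 3" "\<sigma> = 1 \<or> \<sigma> = -1"
  shows "\<not> (\<exists>q. norm q \<le> 1 \<and> (\<forall>v\<in>vertex_faces i \<sigma>. q \<in> S (ctr a v)))"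
proof
  assume "\<exists>q. norm q \<le> 1 \<and> (\<forall>v\<in>vertex_faces i \<sigma>. q \<in> S (ctr a v))"
  then obtain q where q1: "norm q \<le> 1" and qS: "\<forall>v\<in>vertex_faces i \<sigma>. q \<in> S (ctr a v)" by blast
  define u where "u = a / sqrt 3"
  have u0: "u > 0" using assms(1) by (simp add: u_def)
  have u1: "u < 1" using assms(2) by (simp add: u_def)
  define v1 :: "real^3" where "v1 = (\<chi> j. if j = i then \<sigma> else 1)"
  define v2 :: "real^3" where "v2 = (\<chi> j. if j = i then \<sigma> else -1)"
  have v1s: "v1 \<in> vertex_faces i \<sigma>" "v2 \<in> vertex_faces i \<sigma>"
    using assms(3) by (auto simp: vertex_faces_def sign_vecs_def v1_def v2_def)
  have vs1: "v1 \<in> sign_vecs" "v2 \<in> sign_vecs" using v1s by (auto simp: vertex_faces_def)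
  have e1: "norm q ^ 2 + 1 = 2 * (q \<bullet> ctr a v1)"
    using qS v1s(1) inS[OF norm_ctr[OF _ vs1(1)]] assms(1) by auto
  have e2: "norm q ^ 2 + 1 = 2 * (q \<bullet> ctr a v2)"
    using qS v1s(2) inS[OF norm_ctr[OF _ vs1(2)]] assms(1) by auto
  have ss: "\<sigma> + \<sigma> = 2 * \<sigma>" by simp
  have sum0: "q \<bullet> (ctr a v1 + ctr a v2) = (\<Sum>j\<in>UNIV. if j = i then 2 * u * \<sigma> * q $ i else 0)"
    unfolding inner_vec_def
    by (rule sum.cong) (auto simp: ctr_def v1_def v2_def u_def algebra_simps)
  have sum1: "q \<bullet> ctr a v1 + q \<bullet> ctr a v2 = 2 * u * \<sigma> * q $ i" unfolding inner_add_right[symmetric] sum0 by simp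
  have key: "norm q ^ 2 + 1 = 2 * u * \<sigma> * q $ i" using e1 e2 sum1 by linarith
  define x where "x = \<bar>q $ i\<bar>"
  have x1: "x \<le> 1" using component_le_norm_cart[of q i] q1 by (simp add: x_def)
  have x0: "x \<ge> 0" by (simp add: x_def)
  have xq: "x \<le> norm q" using component_le_norm_cart[of q i] by (simp add: x_def)
  have xn: "x^2 \<le> norm q ^ 2" by (rule power_mono[OF xq x0])
  have "2 * u * \<sigma> * q $ i \<le> 2 * u * x"
    using assms(3) u0 by (auto simp: x_def)
  hence k2: "x^2 + 1 \<le> 2 * u * x" using key xn by linarith
  have sq: "2 * x \<le> x^2 + 1" using power2_diff[of x 1] zero_le_power2[of "x - 1"] by simp
  show False
  proof (cases "x = 0")
    case True thus False using k2 by simp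
  next
    case False
    hence "x > 0" using x0 by simp
    hence "u * x < 1 * x" using u1 by (intro mult_strict_right_mono) auto
    thus False using k2 sq by linarith
  qed
qed

lemma pair_facts:
  assumes "a > 1"
  shows "norm (ctr a (vector [1, 1, 1])) = a" "norm (ctr a (vector [1, -1, 1])) = a"
    "norm (ctr a (vector [1, 1, 1]) - ctr a (vector [1, -1, 1]))^2 = 4 * a^2 / 3"
  using norm_ctr[OF _ v111(1)] norm_ctr[OF _ v111(2)] assms ctr_diff d111 by auto

lemma oct_angle_eq:
  assumes "a > 1" "a^2 \<ge> 3/2"
  shows "oct_angle a = pi - arccos (1 - (4 * a^2 / 3) / (2 * (a^2 - 1)))"
    and "\<bar>1 - (4 * a^2 / 3) / (2 * (a^2 - 1))\<bar> \<le> 1"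
proof -
  let ?c1 = "ctr a (vector [1, 1, 1])" and ?c2 = "ctr a (vector [1, -1, 1])"
  note pf = pair_facts[OF assms(1)]
  have "S ?c1 \<inter> S ?c2 \<noteq> {}" by (rule meet[OF pf(1) pf(2) assms(1)]) (use pf(3) assms(2) in simp)
  hence "\<exists>q. q \<in> S ?c1 \<inter> S ?c2" by blast
  hence sq: "(SOME q. q \<in> S ?c1 \<inter> S ?c2) \<in> S ?c1 \<inter> S ?c2" by (rule someI_ex)
  have "oct_angle a = dihedral_at ?c1 ?c2 (SOME q. q \<in> S ?c1 \<inter> S ?c2)"
    unfolding oct_angle_def Let_def ..
  also have "\<dots> = pi - arccos (1 - norm (?c1 - ?c2)^2 / (2 * (a^2 - 1)))"
    using sq by (intro dihedral_formula[OF _ _ pf(1) pf(2) assms(1)]) auto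
  finally show "oct_angle a = pi - arccos (1 - (4 * a^2 / 3) / (2 * (a^2 - 1)))" unfolding pf(3) .
  show "\<bar>1 - (4 * a^2 / 3) / (2 * (a^2 - 1))\<bar> \<le> 1"
    using dihedral_range[OF _ _ pf(1) pf(2) assms(1)] sq pf(3) by auto
qed

lemma g_alt: fixes a :: real assumes "a > 1" shows "1 - (4 * a^2 / 3) / (2 * (a^2 - 1)) = 1/3 - 2 / (3 * (a^2 - 1))"
proof -
  have "a^2 - 1 > 0" using assms by (simp add: one_less_power)
  thus ?thesis by (simp add: field_simps)
qed

lemma g_lim: "((\<lambda>x::real. 1/3 - 2 / (3 * (x^2 - 1))) \<longlongrightarrow> 1/3) at_top"
proof -
  have f: "filterlim (\<lambda>x::real. -1 + x^2) at_top at_top"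
    by (rule filterlim_tendsto_add_at_top[OF tendsto_const filterlim_pow_at_top[OF _ filterlim_ident]]) simp
  hence h: "((\<lambda>x::real. inverse (-1 + x^2)) \<longlongrightarrow> 0) at_top" by (rule tendsto_inverse_0_at_top)
  have lim: "((\<lambda>x::real. 1/3 - 2/3 * inverse (-1 + x^2)) \<longlongrightarrow> 1/3 - 2/3 * 0) at_top"
    by (rule tendsto_diff[OF tendsto_const tendsto_mult[OF tendsto_const h]])
  have e: "2/3 * inverse y = 2/(3*y)" for y :: real by (simp add: inverse_eq_divide)
  have e2: "-1 + x^2 = x^2 - 1" for x :: real by simp
  show ?thesis using lim unfolding e e2 by (simp only: mult_zero_right diff_zero)
qed



lemma sq_lt: fixes a x :: real assumes "0 < a" "sqrt x < a" shows "x < a^2"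
proof -
  have "sqrt (a^2) = a" using assms(1) by simp
  thus ?thesis using assms(2) by (metis real_sqrt_less_iff)
qed

lemma sq_gt: fixes a x :: real assumes "0 < a" "a < sqrt x" shows "a^2 < x"
proof -
  have "sqrt (a^2) = a" using assms(1) by simp
  thus ?thesis using assms(2) by (metis real_sqrt_less_iff)
qed

lemma tvert:
  fixes a :: real assumes "a \<ge> sqrt 3"
  shows "\<exists>t. 0 < t \<and> t \<le> 1 \<and> (a > sqrt 3 \<longrightarrow> t < 1) \<and> (a = sqrt 3 \<longrightarrow> t = 1) \<and> t^2 + 1 = 2 * (a / sqrt 3) * t"
proof -
  define u where "u = a / sqrt 3"
  have s3: "sqrt 3 > 0" by simp
  have u1: "u \<ge> 1" using assms s3 by (simp add: u_def le_divide_eq)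
  have ug: "a > sqrt 3 \<Longrightarrow> u > 1" using s3 by (simp add: u_def less_divide_eq)
  have ue: "a = sqrt 3 \<Longrightarrow> u = 1" using s3 by (simp add: u_def)
  define s where "s = sqrt (u^2 - 1)"
  have p: "u^2 - 1 \<ge> 0" using u1 by (simp add: one_le_power)
  have ss: "s^2 = u^2 - 1" using p by (simp add: s_def)
  define t where "t = u - s"
  have eq: "t^2 + 1 - 2 * u * t = s^2 - (u^2 - 1)" by (simp add: t_def power2_eq_square algebra_simps)
  have teq: "t^2 + 1 = 2 * u * t" using eq ss by simp
  have "s < sqrt (u^2)" unfolding s_def by (rule real_sqrt_less_mono) simp
  hence sl: "s < u" using u1 by simp
  have "(u - 1)^2 \<le> u^2 - 1" using u1 by (simp add: power2_eq_square algebra_simps)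
  hence "u - 1 \<le> s" unfolding s_def by (rule real_le_rsqrt)
  hence t1: "t \<le> 1" by (simp add: t_def)
  have t1s: "t < 1" if "a > sqrt 3"
  proof -
    have "(u - 1)^2 < u^2 - 1" using ug[OF that] by (simp add: power2_eq_square algebra_simps)
    hence "u - 1 < s" unfolding s_def by (rule real_less_rsqrt)
    thus ?thesis by (simp add: t_def)
  qed
  have t1e: "t = 1" if "a = sqrt 3" using ue[OF that] by (simp add: t_def s_def)
  have t0: "0 < t" using sl by (simp add: t_def)
  show ?thesis unfolding u_def[symmetric] using t0 t1 t1s t1e teq by blast
qed

theorem mainTheorem18:
  fixes a :: real
  assumes "a > 1"
  shows
   "(a > sqrt 3 \<longrightarrow>
       (\<exists>p. norm p < 1 \<and> (\<forall>s1\<in>{1, -1}. \<forall>s2\<in>{1, -1}.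
          p \<in> S (ctr a (vector [s1, s2, 1])))) \<and> oct_finite a)
  \<and> (a = sqrt 3 \<longrightarrow> oct_ideal a \<and>
       (\<forall>v w. adjacent_faces v w \<longrightarrow>
          (\<forall>q\<in>S (ctr a v) \<inter> S (ctr a w). dihedral_at (ctr a v) (ctr a w) q = pi / 2)))
  \<and> strict_mono_on {sqrt 3..} oct_angle
  \<and> (oct_angle \<longlongrightarrow> arccos (-1/3)) at_top
  \<and> (a = sqrt (3/2) \<longrightarrow>
       (\<exists>q. S (ctr a (vector [1, 1, 1])) \<inter> S (ctr a (vector [1, -1, 1])) = {q}))
  \<and> (a < sqrt (3/2) \<longrightarrow>
       S (ctr a (vector [1, 1, 1])) \<inter> S (ctr a (vector [1, -1, 1])) = {})
  \<and> (a > sqrt (3/2) \<longrightarrow>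
       S (ctr a (vector [1, 1, 1])) \<inter> S (ctr a (vector [1, -1, 1])) \<noteq> {} \<and>
       (\<forall>q\<in>S (ctr a (vector [1, 1, 1])) \<inter> S (ctr a (vector [1, -1, 1])).
          cos (dihedral_at (ctr a (vector [1, 1, 1])) (ctr a (vector [1, -1, 1])) q)
            = (3 - a^2) / (3 * (a^2 - 1))))
  \<and> (sqrt (3/2) < a \<and> a < sqrt 3 \<longrightarrow> oct_hyperideal a)"
proof -
  have a1: "1 < a" using assms .
  have a0: "0 < a" using assms by simp
  have s3: "sqrt 3 > 0" by simp
  have sv: "(\<chi> j. if j = i then \<sigma> else 1) \<in> sign_vecs" if "\<sigma> = 1 \<or> \<sigma> = -1" for i :: 3 and \<sigma> :: real
    using that by (auto simp: sign_vecs_def)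
  have P1: "(\<exists>p. norm p < 1 \<and> (\<forall>s1\<in>{1, -1}. \<forall>s2\<in>{1, -1}.
          p \<in> S (ctr a (vector [s1, s2, 1])))) \<and> oct_finite a" if ag: "a > sqrt 3"
  proof -
    obtain t where t0: "0 < t" and t1: "t < 1" and teq: "t^2 + 1 = 2 * (a / sqrt 3) * t"
      using tvert[of a] ag by auto
    have A: "\<exists>p. norm p < 1 \<and> (\<forall>s1\<in>{1, -1}. \<forall>s2\<in>{1, -1}.
          p \<in> S (ctr a (vector [s1, s2, 1])))"
    proof (intro exI[of _ "(\<chi> j. if j = (3::3) then 1 * t else 0) :: real^3"] conjI ballI)
      show "norm ((\<chi> j. if j = (3::3) then 1 * t else 0) :: real^3) < 1"
        using vertex_pt(2)[of a 1 "vector [1,1,1]" 3 t] a1 v111(1) teq t0 t1 by simp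
      fix s1 s2 :: real assume "s1 \<in> {1, -1}" "s2 \<in> {1, -1}"
      hence vv: "vector [s1, s2, 1] \<in> sign_vecs" by (rule vs)
      show "(\<chi> j. if j = (3::3) then 1 * t else 0) \<in> S (ctr a (vector [s1, s2, 1]))"
        by (rule vertex_pt(1)[OF a1 _ vv _ teq]) simp_all
    qed
    have B: "oct_finite a" unfolding oct_finite_def
    proof (intro allI ballI)
      fix i :: 3 and \<sigma> :: real assume "\<sigma> \<in> {1, -1}"
      hence sg: "\<sigma> = 1 \<or> \<sigma> = -1" by simp
      show "\<exists>q. norm q < 1 \<and> (\<forall>v\<in>vertex_faces i \<sigma>. q \<in> S (ctr a v))"
      proof (intro exI[of _ "(\<chi> j. if j = i then \<sigma> * t else 0) :: real^3"] conjI ballI)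
        show "norm ((\<chi> j. if j = i then \<sigma> * t else 0) :: real^3) < 1"
          using vertex_pt(2)[of a \<sigma> "\<chi> j. if j = i then \<sigma> else 1" i t] a1 sg teq
            sv[OF sg, of i] t0 t1 by simp
        fix v assume "v \<in> vertex_faces i \<sigma>"
        hence vv: "v \<in> sign_vecs" "v $ i = \<sigma>" by (auto simp: vertex_faces_def)
        show "(\<chi> j. if j = i then \<sigma> * t else 0) \<in> S (ctr a v)"
          by (rule vertex_pt(1)[OF a1 sg vv teq])
      qed
    qed
    show ?thesis using A B by blast
  qed
  have P2: "oct_ideal a \<and>
       (\<forall>v w. adjacent_faces v w \<longrightarrow>
          (\<forall>q\<in>S (ctr a v) \<inter> S (ctr a w). dihedral_at (ctr a v) (ctr a w) q = pi / 2))" if ae: "a = sqrt 3"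
  proof -
    obtain t where t1: "t = 1" and teq: "t^2 + 1 = 2 * (a / sqrt 3) * t"
      using tvert[of a] ae by auto
    have B: "oct_ideal a" unfolding oct_ideal_def
    proof (intro allI ballI)
      fix i :: 3 and \<sigma> :: real assume "\<sigma> \<in> {1, -1}"
      hence sg: "\<sigma> = 1 \<or> \<sigma> = -1" by simp
      show "\<exists>q. norm q = 1 \<and> (\<forall>v\<in>vertex_faces i \<sigma>. q \<in> S (ctr a v))"
      proof (intro exI[of _ "(\<chi> j. if j = i then \<sigma> * t else 0) :: real^3"] conjI ballI)
        show "norm ((\<chi> j. if j = i then \<sigma> * t else 0) :: real^3) = 1"
          using vertex_pt(2)[of a \<sigma> "\<chi> j. if j = i then \<sigma> else 1" i t] a1 sg teq
            sv[OF sg, of i] t1 by simp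
        fix v assume "v \<in> vertex_faces i \<sigma>"
        hence vv: "v \<in> sign_vecs" "v $ i = \<sigma>" by (auto simp: vertex_faces_def)
        show "(\<chi> j. if j = i then \<sigma> * t else 0) \<in> S (ctr a v)"
          by (rule vertex_pt(1)[OF a1 sg vv teq])
      qed
    qed
    have a2: "a^2 = 3" using ae by simp
    have C: "dihedral_at (ctr a v) (ctr a w) q = pi / 2"
      if adj: "adjacent_faces v w" and q: "q \<in> S (ctr a v) \<inter> S (ctr a w)" for v w q
    proof -
      have vw: "v \<in> sign_vecs" "w \<in> sign_vecs" using adj by (auto simp: adjacent_faces_def)
      have d: "norm (ctr a v - ctr a w)^2 = 4" using ctr_diff[of a v w] adj_dist[OF adj] a2 by simp
      have "dihedral_at (ctr a v) (ctr a w) q = pi - arccos (1 - norm (ctr a v - ctr a w)^2 / (2 * (a^2 - 1)))"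
        using q by (intro dihedral_formula[OF _ _ norm_ctr[OF a0 vw(1)] norm_ctr[OF a0 vw(2)] a1]) auto
      also have "\<dots> = pi / 2" unfolding d a2 by simp
      finally show ?thesis .
    qed
    show ?thesis using B C by blast
  qed
  define G where "G x = 1/3 - 2 / (3 * (x^2 - 1))" for x :: real
  have OA: "oct_angle x = pi - arccos (G x) \<and> -1 \<le> G x \<and> G x \<le> 1" if "x > 1" "x^2 \<ge> 3/2" for x
    using oct_angle_eq[OF that] g_alt[OF that(1)] unfolding G_def by (simp add: abs_le_iff)
  have P3: "strict_mono_on {sqrt 3..} oct_angle"
  proof (rule strict_mono_onI)
    fix x y assume "x \<in> {sqrt 3..}" "y \<in> {sqrt 3..}" "x < y"
    hence xs: "sqrt 3 \<le> x" and xy: "x < y" by auto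
    have x1: "x > 1" using xs by (smt (verit) real_sqrt_gt_1_iff)
    have y1: "y > 1" using x1 xy by simp
    have "3 \<le> x^2" using xs by (metis real_sqrt_le_iff real_sqrt_pow2 zero_le_numeral power_mono real_sqrt_ge_zero)
    hence x2: "x^2 \<ge> 3/2" by simp
    have xy2: "x^2 < y^2" using xy x1 by (intro power_strict_mono) auto
    hence y2: "y^2 \<ge> 3/2" using x2 by simp
    have px: "3 * (x^2 - 1) > 0" using x2 by simp
    have "2 / (3 * (y^2 - 1)) < 2 / (3 * (x^2 - 1))"
      by (rule divide_strict_left_mono) (use xy2 px in auto)
    hence Gl: "G x < G y" unfolding G_def by simp
    have "arccos (G y) < arccos (G x)"
      by (rule arccos_less_arccos) (use OA[OF x1 x2] OA[OF y1 y2] Gl in auto)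
    thus "oct_angle x < oct_angle y" using OA[OF x1 x2] OA[OF y1 y2] by simp
  qed
  have P4: "(oct_angle \<longlongrightarrow> arccos (-1/3)) at_top"
  proof -
    have gl: "(G \<longlongrightarrow> 1/3) at_top" unfolding G_def by (rule g_lim)
    have "((\<lambda>x. pi - arccos (G x)) \<longlongrightarrow> pi - arccos (1/3)) at_top"
      by (rule tendsto_diff[OF tendsto_const isCont_tendsto_compose[OF isCont_arccos gl]]) auto
    moreover have "arccos (-1/3) = pi - arccos (1/3)" using arccos_minus[of "1/3"] by simp
    moreover have "eventually (\<lambda>x. oct_angle x = pi - arccos (G x)) at_top"
    proof (rule eventually_mono[OF eventually_gt_at_top[of 2]])
      fix x :: real assume "2 < x"
      hence "x > 1" "x^2 \<ge> 3/2" using power_strict_mono[of 2 x 2] by auto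
      thus "oct_angle x = pi - arccos (G x)" using OA by blast
    qed
    ultimately show ?thesis using tendsto_cong by metis
  qed
  let ?c1 = "ctr a (vector [1, 1, 1])" and ?c2 = "ctr a (vector [1, -1, 1])"
  note pf = pair_facts[OF a1]
  have P5: "\<exists>q. S ?c1 \<inter> S ?c2 = {q}" if ae: "a = sqrt (3/2)"
  proof -
    have a2: "a^2 = 3/2" using ae by simp
    have d: "norm (?c1 - ?c2)^2 = 4 * (a^2 - 1)" using pf(3) a2 by simp
    have "S ?c1 \<inter> S ?c2 \<noteq> {}" by (rule meet[OF pf(1) pf(2) a1]) (use d in simp)
    then obtain q where q: "q \<in> S ?c1 \<inter> S ?c2" by blast
    have uq: "p = (1/2) *\<^sub>R (?c1 + ?c2)" if "p \<in> S ?c1 \<inter> S ?c2" for p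
      using that by (intro tangent_pt[OF _ _ pf(1) pf(2) a1 d]) auto
    have "S ?c1 \<inter> S ?c2 = {q}" using q uq[OF q] uq by blast
    thus ?thesis by blast
  qed
  have P6: "S ?c1 \<inter> S ?c2 = {}" if al: "a < sqrt (3/2)"
  proof (rule ccontr)
    assume "S ?c1 \<inter> S ?c2 \<noteq> {}"
    then obtain p where p: "p \<in> S ?c1" "p \<in> S ?c2" by blast
    have "norm (?c1 - ?c2)^2 \<le> 4 * (a^2 - 1)" by (rule meet_bound[OF p pf(1) pf(2) a1])
    hence "a^2 \<ge> 3/2" using pf(3) by simp
    moreover have "a^2 < 3/2" by (rule sq_gt[OF a0 al])
    ultimately show False by simp
  qed
  have P7: "S ?c1 \<inter> S ?c2 \<noteq> {} \<and>
       (\<forall>q\<in>S ?c1 \<inter> S ?c2. cos (dihedral_at ?c1 ?c2 q) = (3 - a^2) / (3 * (a^2 - 1)))"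
    if ag: "a > sqrt (3/2)"
  proof -
    have a2: "a^2 > 3/2" by (rule sq_lt[OF a0 ag])
    have ne: "S ?c1 \<inter> S ?c2 \<noteq> {}" by (rule meet[OF pf(1) pf(2) a1]) (use pf(3) a2 in simp)
    have C: "cos (dihedral_at ?c1 ?c2 q) = (3 - a^2) / (3 * (a^2 - 1))" if q: "q \<in> S ?c1 \<inter> S ?c2" for q
    proof -
      let ?X = "1 - norm (?c1 - ?c2)^2 / (2 * (a^2 - 1))"
      have "dihedral_at ?c1 ?c2 q = pi - arccos ?X"
        using q by (intro dihedral_formula[OF _ _ pf(1) pf(2) a1]) auto
      moreover have "\<bar>?X\<bar> \<le> 1" using q by (intro dihedral_range[OF _ _ pf(1) pf(2) a1]) auto
      ultimately have "cos (dihedral_at ?c1 ?c2 q) = - ?X" by (simp add: abs_le_iff)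
      also have "\<dots> = (3 - a^2) / (3 * (a^2 - 1))"
      proof -
        have "a^2 - 1 > 0" using a2 by simp
        thus ?thesis unfolding pf(3) by (simp add: field_simps)
      qed
      finally show ?thesis .
    qed
    show ?thesis using ne C by blast
  qed
  have P8: "oct_hyperideal a" if al: "sqrt (3/2) < a \<and> a < sqrt 3"
  proof -
    have a2: "a^2 > 3/2" by (rule sq_lt[OF a0]) (use al in simp)
    have A: "S (ctr a v) \<inter> S (ctr a w) \<noteq> {}" if adj: "adjacent_faces v w" for v w
    proof -
      have vw: "v \<in> sign_vecs" "w \<in> sign_vecs" using adj by (auto simp: adjacent_faces_def)
      have d: "norm (ctr a v - ctr a w)^2 = a^2 / 3 * 4" using ctr_diff[of a v w] adj_dist[OF adj] by simp
      show ?thesis by (rule meet[OF norm_ctr[OF a0 vw(1)] norm_ctr[OF a0 vw(2)] a1]) (use d a2 in simp)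
    qed
    have B: "\<not> (\<exists>q. norm q \<le> 1 \<and> (\<forall>v\<in>vertex_faces i \<sigma>. q \<in> S (ctr a v)))" if "\<sigma> \<in> {1, -1}" for i \<sigma>
      by (rule hyper_vertex) (use a1 al that in auto)
    show ?thesis unfolding oct_hyperideal_def using A B by blast
  qed
  show ?thesis using P1 P2 P3 P4 P5 P6 P7 P8 by blast
qed

end
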